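(* For every finite capacitated graph $G=(V,E,c_V,c_E)$ with nonnegative vertex and edge capacities, the Rising-Tide algorithm terminates and returns a maximal feasible fractional matching of $G$.
   Context: Let $G=(V,E,c_V,c_E)$ be a graph (edges may include self-loops) with vertex capacities $c_V:V\to\mathbb{R}_{\ge0}$ and edge capacities $c_E:E\to\mathbb{R}_{\ge0}$. A function $\mu:E\to\mathbb{R}_{\ge0}$ is a feasible fractional matching if $\mu(i,j)\le c_E(i,j)$ for every edge and $\sum_j\mu(i,j)\le c_V(i)$ for every vertex $i$, where a self-loop $(i,i)$ counts only once in the sum for $i$. It is maximal if no feasible $\mu'\ne\mu$ satisfies $\mu'\ge\mu$ pointwise. Vertex $i$ is saturated if $\sum_j\mu(i,j)=c_V(i)$; edge $(i,j)$ is saturated if $\mu(i,j)=c_E(i,j)$. Rising-Tide: set $E'=\{e\in E: c_E(e)>0\}$ and $\mu\equiv0$; while $E'\neq\emptyset$: choose the maximum $\delta\ge0$ such that $\mu+\delta\cdot\mathbf{1}_{E'}$ is a feasible fractional matching, set $\mu\gets\mu+\delta\mathbf{1}_{E'}$, and remove from $E'$ every edge $(i,j)$ such that $i$, $j$, or $(i,j)$ is saturated; finally return $\mu$. *)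

theory Defs
  imports Complex_Main "HOL-Library.While_Combinator"
begin

text \<open>A capacitated graph: vertex set V, edge set E of unordered pairs
  (an edge is a set of card 2; a self-loop (i,i) is the singleton {i}),
  vertex capacities cV and edge capacities cE.\<close>

definition graph_edges :: "'a set \<Rightarrow> 'a set set \<Rightarrow> bool" where
  "graph_edges V E \<longleftrightarrow> (\<forall>e\<in>E. e \<subseteq> V \<and> (card e = 1 \<or> card e = 2))"

text \<open>Load of vertex i; a self-loop {i} is counted once.\<close>
definition load :: "'a set set \<Rightarrow> ('a set \<Rightarrow> real) \<Rightarrow> 'a \<Rightarrow> real" where
  "load E mu i = (\<Sum>e\<in>{e\<in>E. i \<in> e}. mu e)"

definition feasible_fm ::
  "'a set \<Rightarrow> 'a set set \<Rightarrow> ('a \<Rightarrow> real) \<Rightarrow> ('a set \<Rightarrow> real) \<Rightarrow> ('a set \<Rightarrow> real) \<Rightarrow> bool" where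
  "feasible_fm V E cV cE mu \<longleftrightarrow>
     (\<forall>e. e \<notin> E \<longrightarrow> mu e = 0) \<and>
     (\<forall>e\<in>E. 0 \<le> mu e \<and> mu e \<le> cE e) \<and>
     (\<forall>i\<in>V. load E mu i \<le> cV i)"

definition maximal_fm ::
  "'a set \<Rightarrow> 'a set set \<Rightarrow> ('a \<Rightarrow> real) \<Rightarrow> ('a set \<Rightarrow> real) \<Rightarrow> ('a set \<Rightarrow> real) \<Rightarrow> bool" where
  "maximal_fm V E cV cE mu \<longleftrightarrow> feasible_fm V E cV cE mu \<and>
     \<not> (\<exists>mu'. feasible_fm V E cV cE mu' \<and> mu' \<noteq> mu \<and> (\<forall>e. mu e \<le> mu' e))"

definition rt_step ::
  "'a set \<Rightarrow> 'a set set \<Rightarrow> ('a \<Rightarrow> real) \<Rightarrow> ('a set \<Rightarrow> real)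
   \<Rightarrow> ('a set \<Rightarrow> real) \<times> 'a set set \<Rightarrow> ('a set \<Rightarrow> real) \<times> 'a set set" where
  "rt_step V E cV cE st =
     (let mu = fst st; E' = snd st;
          delta = (GREATEST d::real. 0 \<le> d \<and>
                     feasible_fm V E cV cE (\<lambda>e. mu e + (if e \<in> E' then d else 0)));
          mu' = (\<lambda>e. mu e + (if e \<in> E' then delta else 0));
          E'' = {e\<in>E'. \<not> (mu' e = cE e \<or> (\<exists>i\<in>e. load E mu' i = cV i))}
      in (mu', E''))"

text \<open>Rising-Tide: None means non-termination.\<close>
definition rising_tide ::
  "'a set \<Rightarrow> 'a set set \<Rightarrow> ('a \<Rightarrow> real) \<Rightarrow> ('a set \<Rightarrow> real) \<Rightarrow> ('a set \<Rightarrow> real) option" where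
  "rising_tide V E cV cE =
     map_option fst
       (while_option (\<lambda>st. snd st \<noteq> {}) (rt_step V E cV cE)
          ((\<lambda>_. 0), {e\<in>E. cE e > 0}))"

end

theory Submission
  imports Defs
begin

lemma greatest_aux:
  fixes a :: "'e \<Rightarrow> real" and b k :: "'v \<Rightarrow> real"
  assumes "finite A" "A \<noteq> {}" "finite B" "\<forall>x\<in>A. 0 \<le> a x"
    "\<forall>i\<in>B. 0 \<le> b i \<and> 0 \<le> k i"
  shows "\<exists>D. (0 \<le> D \<and> (\<forall>x\<in>A. D \<le> a x) \<and> (\<forall>i\<in>B. D * k i \<le> b i))
     \<and> (\<forall>d. (0 \<le> d \<and> (\<forall>x\<in>A. d \<le> a x) \<and> (\<forall>i\<in>B. d * k i \<le> b i)) \<longrightarrow> d \<le> D)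
     \<and> ((\<exists>x\<in>A. D = a x) \<or> (\<exists>i\<in>B. k i > 0 \<and> D * k i = b i))"
proof -
  define M where "M = a ` A \<union> (\<lambda>i. b i / k i) ` {i\<in>B. k i > 0}"
  have fin: "finite M" "M \<noteq> {}" using assms unfolding M_def by auto
  define D where "D = Min M"
  have DM: "D \<in> M" using fin unfolding D_def by simp
  have Dle: "\<And>m. m \<in> M \<Longrightarrow> D \<le> m" using fin unfolding D_def by simp
  have D0: "0 \<le> D" using DM assms unfolding M_def by auto
  have S: "\<forall>i\<in>B. D * k i \<le> b i"
  proof
    fix i assume i: "i \<in> B"
    show "D * k i \<le> b i"
    proof (cases "k i > 0")
      case True
      hence "D \<le> b i / k i" using Dle i unfolding M_def by auto
      thus ?thesis using True by (simp add: pos_le_divide_eq)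
    next
      case False
      hence "k i = 0" using assms i by force
      thus ?thesis using assms i by simp
    qed
  qed
  have G: "d \<le> D" if "0 \<le> d" "\<forall>x\<in>A. d \<le> a x" "\<forall>i\<in>B. d * k i \<le> b i" for d
  proof -
    have "d \<le> m" if "m \<in> M" for m
      using that \<open>\<forall>x\<in>A. d \<le> a x\<close> \<open>\<forall>i\<in>B. d * k i \<le> b i\<close> unfolding M_def
      by (auto simp: pos_le_divide_eq)
    thus ?thesis using fin DM unfolding D_def by simp
  qed
  have W: "(\<exists>x\<in>A. D = a x) \<or> (\<exists>i\<in>B. k i > 0 \<and> D * k i = b i)"
    using DM unfolding M_def by auto
  show ?thesis using D0 Dle S G W unfolding M_def by blast
qed


lemma load_add:
  assumes "E' \<subseteq> E" "finite E"
  shows "load E (\<lambda>e. mu e + (if e \<in> E' then d else 0)) i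
         = load E mu i + d * real (card {e\<in>E'. i \<in> e})"
proof -
  have "load E (\<lambda>e. mu e + (if e \<in> E' then d else 0)) i
      = load E mu i + (\<Sum>e\<in>{e\<in>E. i \<in> e}. if e \<in> E' then d else 0)"
    unfolding load_def by (simp add: sum.distrib)
  also have "(\<Sum>e\<in>{e\<in>E. i \<in> e}. if e \<in> E' then d else 0) = (\<Sum>e\<in>{x\<in>{e\<in>E. i \<in> e}. x \<in> E'}. d)"
    by (rule sum.inter_filter[symmetric]) (use assms in auto)
  also have "{x\<in>{e\<in>E. i \<in> e}. x \<in> E'} = {e\<in>E'. i \<in> e}" using assms by auto
  finally show ?thesis by (simp add: mult.commute)
qed

lemma load_mono:
  assumes "finite E" "\<And>e. mu e \<le> mu' e" and that: "x \<in> E" "i \<in> x"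
  shows "load E mu i + (mu' x - mu x) \<le> load E mu' i"
proof -
  have "load E mu' i - load E mu i = (\<Sum>e\<in>{e\<in>E. i \<in> e}. mu' e - mu e)"
    unfolding load_def by (simp add: sum_subtractf)
  also have "\<dots> \<ge> (\<Sum>e\<in>{x}. mu' e - mu e)"
    by (rule sum_mono2) (use assms that in auto)
  finally show ?thesis by simp
qed

definition rinv where
  "rinv V E cV cE st \<longleftrightarrow> feasible_fm V E cV cE (fst st) \<and> snd st \<subseteq> E \<and>
     (\<forall>e\<in>E - snd st. fst st e = cE e \<or> (\<exists>i\<in>e. load E (fst st) i = cV i))"

lemma step_lemma:
  assumes fV: "finite V" and gE: "graph_edges V E"
    and I: "rinv V E cV cE st" and ne: "snd st \<noteq> {}"
  shows "rinv V E cV cE (rt_step V E cV cE st) \<and> snd (rt_step V E cV cE st) \<subset> snd st"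
proof -
  obtain mu E' where st: "st = (mu, E')" by fastforce
  have sub: "E \<subseteq> Pow V" using gE unfolding graph_edges_def by auto
  have fE: "finite E" using finite_subset[OF sub] fV by simp
  have E'E: "E' \<subseteq> E" and fm: "feasible_fm V E cV cE mu"
    and blk: "\<forall>e\<in>E - E'. mu e = cE e \<or> (\<exists>i\<in>e. load E mu i = cV i)"
    using I st unfolding rinv_def by auto
  have fE': "finite E'" using finite_subset[OF E'E fE] .
  have E'ne: "E' \<noteq> {}" using ne st by simp
  define k where "k i = real (card {e\<in>E'. i \<in> e})" for i
  define F where "F d = (\<lambda>e. mu e + (if e \<in> E' then d else 0))" for d
  have Fload: "load E (F d) i = load E mu i + d * k i" for d i
    unfolding F_def k_def using load_add[OF E'E fE] by simp
  have equiv: "(0 \<le> d \<and> feasible_fm V E cV cE (F d)) \<longleftrightarrow>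
     (0 \<le> d \<and> (\<forall>x\<in>E'. d \<le> cE x - mu x) \<and> (\<forall>i\<in>V. d * k i \<le> cV i - load E mu i))" for d
  proof
    assume h: "0 \<le> d \<and> feasible_fm V E cV cE (F d)"
    have a: "\<forall>x\<in>E'. d \<le> cE x - mu x"
    proof
      fix x assume "x \<in> E'"
      hence "x \<in> E" "F d x = mu x + d" using E'E by (auto simp: F_def)
      thus "d \<le> cE x - mu x" using h unfolding feasible_fm_def by force
    qed
    have b: "\<forall>i\<in>V. d * k i \<le> cV i - load E mu i"
      using h unfolding feasible_fm_def Fload by force
    show "0 \<le> d \<and> (\<forall>x\<in>E'. d \<le> cE x - mu x) \<and> (\<forall>i\<in>V. d * k i \<le> cV i - load E mu i)"
      using h a b by blast
  next
    assume h: "0 \<le> d \<and> (\<forall>x\<in>E'. d \<le> cE x - mu x) \<and> (\<forall>i\<in>V. d * k i \<le> cV i - load E mu i)"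
    have "feasible_fm V E cV cE (F d)"
      unfolding feasible_fm_def
    proof (intro conjI allI impI ballI)
      fix e assume "e \<notin> E" thus "F d e = 0" using fm E'E unfolding feasible_fm_def F_def by auto
    next
      fix e assume e: "e \<in> E"
      show "0 \<le> F d e" using fm e h unfolding feasible_fm_def F_def by auto
      show "F d e \<le> cE e"
      proof (cases "e \<in> E'")
        case True thus ?thesis using h unfolding F_def by auto
      next
        case False thus ?thesis using fm e unfolding F_def feasible_fm_def by auto
      qed
    next
      fix i assume "i \<in> V" thus "load E (F d) i \<le> cV i" using h unfolding Fload by auto
    qed
    thus "0 \<le> d \<and> feasible_fm V E cV cE (F d)" using h by blast
  qed
  obtain D where
    SD: "0 \<le> D \<and> (\<forall>x\<in>E'. D \<le> cE x - mu x) \<and> (\<forall>i\<in>V. D * k i \<le> cV i - load E mu i)"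
    and GD: "\<forall>d. (0 \<le> d \<and> (\<forall>x\<in>E'. d \<le> cE x - mu x) \<and> (\<forall>i\<in>V. d * k i \<le> cV i - load E mu i)) \<longrightarrow> d \<le> D"
    and WD: "(\<exists>x\<in>E'. D = cE x - mu x) \<or> (\<exists>i\<in>V. k i > 0 \<and> D * k i = cV i - load E mu i)"
  proof -
    have pa: "\<forall>x\<in>E'. 0 \<le> cE x - mu x" using fm E'E unfolding feasible_fm_def by force
    have pb: "\<forall>i\<in>V. 0 \<le> cV i - load E mu i \<and> 0 \<le> k i" using fm unfolding feasible_fm_def k_def by force
    show ?thesis using greatest_aux[OF fE' E'ne fV pa pb] that by blast
  qed
  have grt: "(GREATEST d::real. 0 \<le> d \<and> feasible_fm V E cV cE (F d)) = D"
    by (rule Greatest_equality) (use SD GD equiv in blast)+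
  define E'' where "E'' = {e\<in>E'. \<not> (F D e = cE e \<or> (\<exists>i\<in>e. load E (F D) i = cV i))}"
  have rt: "rt_step V E cV cE st = (F D, E'')"
  proof -
    have grt': "(GREATEST d::real. 0 \<le> d \<and> feasible_fm V E cV cE (\<lambda>e. mu e + (if e \<in> E' then d else 0))) = D"
      using grt unfolding F_def .
    show ?thesis unfolding rt_step_def st Let_def fst_conv snd_conv grt' F_def E''_def ..
  qed
  have fD: "feasible_fm V E cV cE (F D)" using equiv SD by blast
  have mono: "mu e \<le> F D e" for e using SD by (simp add: F_def)
  have inv2: "rinv V E cV cE (F D, E'')"
    unfolding rinv_def fst_conv snd_conv
  proof (intro conjI ballI)
    show "feasible_fm V E cV cE (F D)" by (rule fD)
    show "E'' \<subseteq> E" using E'E unfolding E''_def by auto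
    fix e assume e: "e \<in> E - E''"
    show "F D e = cE e \<or> (\<exists>i\<in>e. load E (F D) i = cV i)"
    proof (cases "e \<in> E'")
      case True thus ?thesis using e unfolding E''_def by auto
    next
      case False
      hence FDe: "F D e = mu e" by (simp add: F_def)
      from blk e False have "mu e = cE e \<or> (\<exists>i\<in>e. load E mu i = cV i)" by auto
      thus ?thesis
      proof
        assume "mu e = cE e" thus ?thesis using FDe by simp
      next
        assume "\<exists>i\<in>e. load E mu i = cV i"
        then obtain i where i: "i \<in> e" "load E mu i = cV i" by blast
        have iV: "i \<in> V" using i e sub by auto
        have "load E (F D) i \<le> cV i" using fD iV unfolding feasible_fm_def by auto
        moreover have "load E mu i \<le> load E (F D) i" using Fload SD unfolding k_def by simp
        ultimately have "load E (F D) i = cV i" using i by linarith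
        thus ?thesis using i(1) by blast
      qed
    qed
  qed
  have strict: "E'' \<subset> E'"
  proof -
    have "\<exists>x\<in>E'. x \<notin> E''"
      using WD
    proof
      assume "\<exists>x\<in>E'. D = cE x - mu x"
      then obtain x where x: "x \<in> E'" "D = cE x - mu x" by blast
      hence "F D x = cE x" unfolding F_def by simp
      thus ?thesis using x unfolding E''_def by blast
    next
      assume "\<exists>i\<in>V. k i > 0 \<and> D * k i = cV i - load E mu i"
      then obtain i where i: "i \<in> V" "k i > 0" "D * k i = cV i - load E mu i" by blast
      have "{e\<in>E'. i \<in> e} \<noteq> {}" using i(2) unfolding k_def by (metis card.empty of_nat_0 less_irrefl)
      then obtain x where x: "x \<in> E'" "i \<in> x" by blast
      have "load E (F D) i = cV i" using Fload i by simp
      thus ?thesis using x unfolding E''_def by auto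
    qed
    thus ?thesis unfolding E''_def by auto
  qed
  show ?thesis using inv2 strict rt st by simp
qed

theorem lemma10:
  fixes V :: "'a set" and E :: "'a set set"
    and cV :: "'a \<Rightarrow> real" and cE :: "'a set \<Rightarrow> real"
  assumes "finite V"
    and "graph_edges V E"
    and "\<forall>i\<in>V. 0 \<le> cV i"
    and "\<forall>e\<in>E. 0 \<le> cE e"
  shows "\<exists>mu. rising_tide V E cV cE = Some mu \<and> maximal_fm V E cV cE mu"
proof -
  have sub: "E \<subseteq> Pow V" using assms(2) unfolding graph_edges_def by auto
  have fE: "finite E" using finite_subset[OF sub] assms(1) by simp
  define s0 where "s0 = ((\<lambda>_. 0) :: 'a set \<Rightarrow> real, {e\<in>E. cE e > 0})"
  have I0: "rinv V E cV cE s0"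
  proof -
    have l0: "load E (\<lambda>_. 0) i = 0" for i unfolding load_def by simp
    show ?thesis unfolding rinv_def s0_def feasible_fm_def fst_conv snd_conv l0
      using assms(3,4) by force
  qed
  have "\<exists>t. while_option (\<lambda>st. snd st \<noteq> {}) (rt_step V E cV cE) s0 = Some t"
  proof (rule measure_while_option_Some[where f="\<lambda>st. card (snd st)" and P="rinv V E cV cE"])
    fix s assume s: "rinv V E cV cE s" "snd s \<noteq> {}"
    have "finite (snd s)" using s(1) fE unfolding rinv_def by (meson finite_subset)
    thus "rinv V E cV cE (rt_step V E cV cE s) \<and> card (snd (rt_step V E cV cE s)) < card (snd s)"
      using step_lemma[OF assms(1,2) s] by (simp add: psubset_card_mono)
  qed (rule I0)
  then obtain t where t: "while_option (\<lambda>st. snd st \<noteq> {}) (rt_step V E cV cE) s0 = Some t" by blast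
  have It: "rinv V E cV cE t"
    by (rule while_option_rule[where P="rinv V E cV cE", OF _ t I0]) (use step_lemma[OF assms(1,2)] in blast)
  have emp: "snd t = {}" using while_option_stop[OF t] by simp
  have feas: "feasible_fm V E cV cE (fst t)" using It unfolding rinv_def by simp
  have blk: "\<forall>e\<in>E. fst t e = cE e \<or> (\<exists>i\<in>e. load E (fst t) i = cV i)"
    using It emp unfolding rinv_def by simp
  have max: "maximal_fm V E cV cE (fst t)"
    unfolding maximal_fm_def
  proof (intro conjI feas notI)
    assume "\<exists>mu'. feasible_fm V E cV cE mu' \<and> mu' \<noteq> fst t \<and> (\<forall>e. fst t e \<le> mu' e)"
    then obtain mu' where f': "feasible_fm V E cV cE mu'" and ne: "mu' \<noteq> fst t"
      and ge: "\<forall>e. fst t e \<le> mu' e" by blast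
    obtain x where x: "mu' x \<noteq> fst t x" using ne by blast
    have xgt: "fst t x < mu' x" using x ge by (metis order.not_eq_order_implies_strict)
    have xE: "x \<in> E" using x f' feas unfolding feasible_fm_def by metis
    have "fst t x = cE x \<or> (\<exists>i\<in>x. load E (fst t) i = cV i)" using blk xE by blast
    thus False
    proof
      assume "fst t x = cE x" thus False using f' xE xgt unfolding feasible_fm_def by force
    next
      assume "\<exists>i\<in>x. load E (fst t) i = cV i"
      then obtain i where i: "i \<in> x" "load E (fst t) i = cV i" by blast
      have iV: "i \<in> V" using i xE sub by auto
      have "load E (fst t) i + (mu' x - fst t x) \<le> load E mu' i"
        using load_mono[OF fE, of "fst t" mu' x i] ge xE i by blast
      moreover have "load E mu' i \<le> cV i" using f' iV unfolding feasible_fm_def by auto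
      ultimately show False using i xgt by simp
    qed
  qed
  show ?thesis unfolding rising_tide_def using t max s0_def by auto
qed

end
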